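(* Let $n,k$ be positive integers and $X$ a nonempty subset of $[n]$. Let $Q\colon\mathbb{F}_2^{\binom{[n]}{\leq 2}}\to\mathbb{Z}_{2^k}$ be a $k$-integer polynomial of degree $d\geq 1$, written as $Q(x)=\alpha+\sum_{F\in\binom{\binom{[n]}{\leq 2}}{\leq d}}\lambda_F\prod_{e\in F}x(e)\bmod 2^k$, and let $\boldsymbol\lambda=\langle\lambda_F\rangle$ be its coefficients in this representation. Let $V$ be a block HJ-subspace of $\mathbb{F}_2^{\binom{[n]}{\leq 2}}$ of dimension $m$ with wildcard sets $(I_1,\dots,I_m)$ and associated embedding $e_V\colon\mathbb{F}_2^{\binom{[m]}{\leq 2}}\to V$. Assume (i) $\boldsymbol\lambda$ is canonical in $X$, and (ii) for every $i\in[m]$, $I_i\subseteq X$ and $|I_i|=(d+1)!\,2^k$. Then $\deg(Q\circ e_V)<\deg(Q)$.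
   Context: $\binom{S}{\leq j}$ denotes the set of nonempty subsets of $S$ with at most $j$ elements; $\mathbb{Z}_{2^k}=\mathbb{Z}/2^k\mathbb{Z}$. Integer polynomial: $Q\colon\mathbb{F}_2^{\binom{[n]}{\leq 2}}\to\mathbb{Z}_{2^k}$ is a $k$-integer polynomial of degree at most $d$ if $Q(x)=\alpha+\sum_{F}\lambda_F\prod_{e\in F}x(e)\bmod 2^k$, summing over $F\in\binom{\binom{[n]}{\leq 2}}{\leq d}$, with $\alpha,\lambda_F\in\mathbb{Z}_{2^k}$, $x(e)\in\{0,1\}\subseteq\mathbb{Z}_{2^k}$; its degree is the least such $d$. HJ-subspaces: let $n\geq m\geq 1$ and $\boldsymbol{I}=(I_1,\dots,I_m)$ pairwise disjoint nonempty subsets of $[n]$ with $\min I_1<\dots<\min I_m$. For $q\in\binom{[m]}{\leq 2}$ let $b_q$ be the indicator of $\{p\in\binom{[n]}{\leq 2}: p\subseteq\bigcup_{i\in q}I_i,\ p\cap I_i\neq\emptyset\ \forall i\in q\}$, and $\mathrm{Id}_{\boldsymbol I}(x)=\sum_q x(q)b_q$. An HJ-embedding is $e=\mathrm{Id}_{\boldsymbol I}+c$ with $c\in\mathbb{F}_2^{\binom{[n]}{\leq 2}}$ vanishing on $\binom{I_1\cup\dots\cup I_m}{\leq 2}$; its image $V$ is an HJ-subspace of dimension $m$ with wildcard sets $\boldsymbol I$ and $e_V:=e$. $V$ is block if $\max I_i<\min I_{i+1}$ for all $i<m$. Type and canonical: for a nonempty set $F$ of nonempty subsets of $[n]$, writing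 $\bigcup F=\{u_1<\dots<u_\ell\}$, $\tau(F)=\{S\subseteq[\ell]:\{u_i:i\in S\}\in F\}$. The collection $\boldsymbol\lambda$ is canonical in $X$ if $\lambda_{F_1}=\lambda_{F_2}$ whenever $F_1,F_2\in\binom{\binom{X}{\leq 2}}{\leq d}$ and $\tau(F_1)=\tau(F_2)$. *)

theory Defs
  imports Main "HOL-Number_Theory.Cong"
begin

definition le_subsets :: "'a set \<Rightarrow> nat \<Rightarrow> 'a set set" where
  "le_subsets S j = {A. A \<subseteq> S \<and> A \<noteq> {} \<and> finite A \<and> card A \<le> j}"

definition edges :: "nat \<Rightarrow> nat set set" where
  "edges n = le_subsets {1..n} 2"

(* A point x of F_2^{binom([n],<=2)} is represented by its support, a subset of edges n;
   x(e) = 1 iff e \<in> x, so prod_{e in F} x(e) = 1 iff F \<subseteq> x.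
   Values in Z_{2^k} are represented by integers, compared modulo 2^k. *)
definition int_poly_rep ::
  "nat \<Rightarrow> nat \<Rightarrow> nat \<Rightarrow> (nat set set \<Rightarrow> int) \<Rightarrow> int \<Rightarrow> (nat set set \<Rightarrow> int) \<Rightarrow> bool" where
  "int_poly_rep n k d Q \<alpha> lam \<longleftrightarrow>
     (\<forall>x. x \<subseteq> edges n \<longrightarrow>
        [Q x = \<alpha> + (\<Sum>F\<in>le_subsets (edges n) d. lam F * (if F \<subseteq> x then 1 else 0))] (mod 2^k))"

definition is_int_poly :: "nat \<Rightarrow> nat \<Rightarrow> nat \<Rightarrow> (nat set set \<Rightarrow> int) \<Rightarrow> bool" where
  "is_int_poly n k d Q \<longleftrightarrow> (\<exists>\<alpha> lam. int_poly_rep n k d Q \<alpha> lam)"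

definition int_poly_deg :: "nat \<Rightarrow> nat \<Rightarrow> (nat set set \<Rightarrow> int) \<Rightarrow> nat" where
  "int_poly_deg n k Q = (LEAST d. is_int_poly n k d Q)"

definition hj_b :: "nat \<Rightarrow> (nat \<Rightarrow> nat set) \<Rightarrow> nat set \<Rightarrow> nat set set" where
  "hj_b n I q = {p \<in> edges n. p \<subseteq> (\<Union>i\<in>q. I i) \<and> (\<forall>i\<in>q. p \<inter> I i \<noteq> {})}"

(* Id_I(x) = sum_q x(q) b_q over F_2 *)
definition hj_Id :: "nat \<Rightarrow> (nat \<Rightarrow> nat set) \<Rightarrow> nat set set \<Rightarrow> nat set set" where
  "hj_Id n I x = {p \<in> edges n. odd (card {q \<in> x. p \<in> hj_b n I q})}"

(* the embedding e = Id_I + c (addition in F_2 = symmetric difference of supports) *)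
definition hj_emb :: "nat \<Rightarrow> (nat \<Rightarrow> nat set) \<Rightarrow> nat set set \<Rightarrow> nat set set \<Rightarrow> nat set set" where
  "hj_emb n I c x = (hj_Id n I x - c) \<union> (c - hj_Id n I x)"

definition hj_data :: "nat \<Rightarrow> nat \<Rightarrow> (nat \<Rightarrow> nat set) \<Rightarrow> nat set set \<Rightarrow> bool" where
  "hj_data n m I c \<longleftrightarrow>
     1 \<le> m \<and> m \<le> n \<and>
     (\<forall>i\<in>{1..m}. I i \<noteq> {} \<and> I i \<subseteq> {1..n}) \<and>
     (\<forall>i\<in>{1..m}. \<forall>j\<in>{1..m}. i \<noteq> j \<longrightarrow> I i \<inter> I j = {}) \<and>
     (\<forall>i. 1 \<le> i \<and> i < m \<longrightarrow> Min (I i) < Min (I (Suc i))) \<and>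
     c \<subseteq> edges n \<and>
     c \<inter> le_subsets (\<Union>i\<in>{1..m}. I i) 2 = {}"

definition hj_block :: "nat \<Rightarrow> nat \<Rightarrow> (nat \<Rightarrow> nat set) \<Rightarrow> nat set set \<Rightarrow> bool" where
  "hj_block n m I c \<longleftrightarrow> hj_data n m I c \<and>
     (\<forall>i. 1 \<le> i \<and> i < m \<longrightarrow> Max (I i) < Min (I (Suc i)))"

definition hj_type :: "nat set set \<Rightarrow> nat set set" where
  "hj_type F = (let U = \<Union>F; u = (\<lambda>i. sorted_list_of_set U ! (i - 1))
                in {S. S \<subseteq> {1..card U} \<and> u ` S \<in> F})"

definition canonical_in :: "nat \<Rightarrow> nat \<Rightarrow> nat set \<Rightarrow> (nat set set \<Rightarrow> int) \<Rightarrow> bool" where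
  "canonical_in k d X lam \<longleftrightarrow>
     (\<forall>F1 F2. F1 \<in> le_subsets (le_subsets X 2) d \<longrightarrow> F2 \<in> le_subsets (le_subsets X 2) d \<longrightarrow>
        hj_type F1 = hj_type F2 \<longrightarrow> [lam F1 = lam F2] (mod 2^k))"

end

theory Submission
  imports Defs
begin


definition rk :: "nat set \<Rightarrow> nat \<Rightarrow> nat" where "rk A x = card {a\<in>A. a<x}"
definition ob :: "nat set \<Rightarrow> nat set \<Rightarrow> nat \<Rightarrow> nat" where
  "ob A B x = (if x\<in>A then sorted_list_of_set B ! rk A x else x)"

lemma sl_less:
  assumes "finite A" "i < j" "j < card A"
  shows "sorted_list_of_set A ! i < sorted_list_of_set A ! j"
  using assms sorted_wrt_nth_less[of "(<)" "sorted_list_of_set A" i j] strict_sorted_list_of_set[of A]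
  by simp

lemma rk_nth:
  assumes "finite A" "j < card A"
  shows "rk A (sorted_list_of_set A ! j) = j"
proof -
  let ?xs = "sorted_list_of_set A"
  have len: "length ?xs = card A" using assms by simp
  have "{a\<in>A. a < ?xs ! j} = set (take j ?xs)"
  proof (intro set_eqI iffI)
    fix a assume a: "a \<in> {a\<in>A. a < ?xs ! j}"
    then obtain i where i: "i < length ?xs" "a = ?xs ! i"
      using assms by (metis (no_types, lifting) in_set_conv_nth mem_Collect_eq set_sorted_list_of_set)
    have "i < j"
    proof (rule ccontr)
      assume "\<not> i < j"
      then have "j = i \<or> j < i" by auto
      then show False using a i sl_less[OF assms(1), of j i] len by auto
    qed
    then show "a \<in> set (take j ?xs)" using i by (auto simp: in_set_conv_nth)
  next
    fix a assume "a \<in> set (take j ?xs)"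
    then obtain i where "i < j" "a = ?xs ! i" using assms len by (auto simp: in_set_conv_nth)
    then show "a \<in> {a\<in>A. a < ?xs ! j}" using assms len sl_less[OF assms(1), of i j]
      by (auto, metis nth_mem length_sorted_list_of_set set_sorted_list_of_set order.strict_trans)
  qed
  moreover have "card (set (take j ?xs)) = j"
    using assms by (simp add: distinct_card)
  ultimately show ?thesis unfolding rk_def by simp
qed

lemma nth_rk:
  assumes "finite A" "x \<in> A"
  shows "sorted_list_of_set A ! rk A x = x" "rk A x < card A"
proof -
  obtain i where i: "i < card A" "x = sorted_list_of_set A ! i"
    using assms by (metis in_set_conv_nth length_sorted_list_of_set set_sorted_list_of_set)
  then show "sorted_list_of_set A ! rk A x = x" "rk A x < card A" using rk_nth[OF assms(1) i(1)] by auto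
qed

lemma rk_mono: "finite A \<Longrightarrow> x \<le> y \<Longrightarrow> rk A x \<le> rk A y"
  unfolding rk_def by (rule card_mono) auto

lemma rk_strict: "finite A \<Longrightarrow> x \<in> A \<Longrightarrow> x < y \<Longrightarrow> rk A x < rk A y"
  unfolding rk_def by (rule psubset_card_mono) auto

lemma ob_in: "finite A \<Longrightarrow> finite B \<Longrightarrow> card A = card B \<Longrightarrow> x \<in> A \<Longrightarrow> ob A B x \<in> B"
  unfolding ob_def using nth_rk(2)[of A x]
  by (metis nth_mem length_sorted_list_of_set set_sorted_list_of_set)

lemma ob_rk: "finite A \<Longrightarrow> finite B \<Longrightarrow> card A = card B \<Longrightarrow> x \<in> A \<Longrightarrow> rk B (ob A B x) = rk A x"
  unfolding ob_def using nth_rk(2)[of A x] rk_nth[of B "rk A x"] by auto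

lemma ob_less: "finite A \<Longrightarrow> finite B \<Longrightarrow> card A = card B \<Longrightarrow> x \<in> A \<Longrightarrow> y \<in> A \<Longrightarrow> x < y \<Longrightarrow> ob A B x < ob A B y"
  unfolding ob_def using nth_rk(2)[of A y] rk_strict[of A x y] sl_less[of B "rk A x" "rk A y"] by auto

lemma ob_comp: "finite A \<Longrightarrow> finite B \<Longrightarrow> finite C \<Longrightarrow> card A = card B \<Longrightarrow> card B = card C \<Longrightarrow> x \<in> A
   \<Longrightarrow> ob B C (ob A B x) = ob A C x"
  using ob_in[of A B x] ob_rk[of A B x] unfolding ob_def[of B C] by (simp add: ob_def[of A C])

lemma ob_id: "finite A \<Longrightarrow> ob A A x = x"
  unfolding ob_def using nth_rk(1)[of A x] by auto

lemma ob_image: "finite A \<Longrightarrow> finite B \<Longrightarrow> card A = card B \<Longrightarrow> ob A B ` A = B"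
proof -
  assume a: "finite A" "finite B" "card A = card B"
  have "ob A B ` A \<subseteq> B" using ob_in[OF a] by auto
  moreover have "inj_on (ob A B) A" 
    by (rule inj_onI) (metis a ob_less linorder_neqE_nat less_irrefl)
  ultimately show ?thesis using a by (metis card_image card_subset_eq)
qed

lemma smo_inj: "\<forall>x\<in>U. \<forall>y\<in>U. x<y \<longrightarrow> \<phi> x < (\<phi> y::nat) \<Longrightarrow> inj_on \<phi> (U::nat set)"
  by (rule inj_onI) (metis linorder_neqE_nat less_irrefl)

lemma sl_map:
  assumes "finite (U::nat set)" "\<forall>x\<in>U. \<forall>y\<in>U. x<y \<longrightarrow> \<phi> x < (\<phi> y::nat)"
  shows "sorted_list_of_set (\<phi> ` U) = map \<phi> (sorted_list_of_set U)"
proof -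
  have inj: "inj_on \<phi> U" using smo_inj[OF assms(2)] .
  have "sorted_wrt (<) (map \<phi> (sorted_list_of_set U))"
    unfolding sorted_wrt_map
    by (rule sorted_wrt_mono_rel[OF _ strict_sorted_list_of_set[of U]]) (use assms in auto)
  moreover have "set (map \<phi> (sorted_list_of_set U)) = \<phi> ` U" using assms by simp
  moreover have "length (map \<phi> (sorted_list_of_set U)) = card (\<phi> ` U)"
    using assms inj by (simp add: card_image)
  ultimately show ?thesis using sorted_list_of_set_unique[of "\<phi> ` U" "map \<phi> (sorted_list_of_set U)"] assms
    by (metis finite_imageI)
qed

lemma type_inv:
  assumes "finite (\<Union>F)" "\<forall>x\<in>\<Union>F. \<forall>y\<in>\<Union>F. x<y \<longrightarrow> \<phi> x < (\<phi> y::nat)"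
  shows "hj_type (image \<phi> ` F) = hj_type F"
proof -
  let ?U = "\<Union>F"
  have inj: "inj_on \<phi> ?U" using smo_inj[OF assms(2)] .
  have U': "\<Union>(image \<phi> ` F) = \<phi> ` ?U" by auto
  have cU: "card (\<phi> ` ?U) = card ?U" using inj by (simp add: card_image)
  have sl: "sorted_list_of_set (\<phi> ` ?U) = map \<phi> (sorted_list_of_set ?U)"
    using sl_map[OF assms] .
  let ?u = "\<lambda>i. sorted_list_of_set ?U ! (i - 1)"
  have key: "(\<lambda>i. sorted_list_of_set (\<phi> ` ?U) ! (i - 1)) ` S \<in> image \<phi> ` F \<longleftrightarrow> ?u ` S \<in> F"
    if S: "S \<subseteq> {1..card ?U}" for S
  proof -
    have e: "(\<lambda>i. sorted_list_of_set (\<phi> ` ?U) ! (i - 1)) ` S = \<phi> ` (?u ` S)"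
      unfolding sl image_image
    proof (rule image_cong)
      fix i assume "i \<in> S"
      then have "i \<in> {1..card ?U}" using S by blast
      then have "i - 1 < length (sorted_list_of_set ?U)" using assms(1) by auto
      then show "map \<phi> (sorted_list_of_set ?U) ! (i - 1) = \<phi> (?u i)" by simp
    qed simp
    have sub: "?u ` S \<subseteq> ?U"
    proof
      fix z assume "z \<in> ?u ` S"
      then obtain i where "i \<in> S" "z = ?u i" by auto
      then have "i \<in> {1..card ?U}" using S by blast
      then have "i - 1 < length (sorted_list_of_set ?U)" using assms(1) by auto
      then show "z \<in> ?U" using \<open>z = ?u i\<close> assms(1)
        by (metis nth_mem set_sorted_list_of_set)
    qed
    show ?thesis unfolding e
    proof
      assume "\<phi> ` (?u ` S) \<in> image \<phi> ` F"
      then obtain A where A: "A \<in> F" "\<phi> ` A = \<phi> ` (?u ` S)" by auto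
      have "A = ?u ` S" using inj_on_image_Pow[OF inj] A sub unfolding inj_on_def by blast
      then show "?u ` S \<in> F" using A by simp
    qed auto
  qed
  show ?thesis unfolding hj_type_def Let_def U' cU using key by auto
qed



locale L =
  fixes n m k d :: nat and X :: "nat set" and I :: "nat \<Rightarrow> nat set" and c :: "nat set set"
  assumes blk: "hj_block n m I c"
    and IX: "\<forall>i\<in>{1..m}. I i \<subseteq> X \<and> card (I i) = fact (d + 1) * 2 ^ k"
    and Xn: "X \<subseteq> {1..n}"
    and d1: "1 \<le> d"
begin

definition "UI = (\<Union>i\<in>{1..m}. I i)"
definition "qq p = {i\<in>{1..m}. p \<inter> I i \<noteq> {}}"

lemma dat: "hj_data n m I c" using blk hj_block_def by auto

lemma fin: "i \<in> {1..m} \<Longrightarrow> finite (I i) \<and> I i \<noteq> {}"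
  using IX by (metis card.infinite card_0_eq fact_nonzero mult_eq_0_iff power_not_zero zero_neq_numeral)

lemma disj: "i \<in> {1..m} \<Longrightarrow> j \<in> {1..m} \<Longrightarrow> i \<noteq> j \<Longrightarrow> I i \<inter> I j = {}"
  using dat unfolding hj_data_def by blast

lemma Isub: "i \<in> {1..m} \<Longrightarrow> I i \<subseteq> {1..n}" using dat unfolding hj_data_def by blast

lemma UIn: "UI \<subseteq> {1..n}" using Isub unfolding UI_def by blast

lemma max_less: "1 \<le> i \<Longrightarrow> i < j \<Longrightarrow> j \<le> m \<Longrightarrow> y \<in> I j \<Longrightarrow> Max (I i) < y"
proof (induction j arbitrary: y)
  case 0 then show ?case by simp
next
  case (Suc j)
  have fj: "finite (I (Suc j))" "I (Suc j) \<noteq> {}" using fin Suc.prems by auto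
  have my: "Min (I (Suc j)) \<le> y" using fj Suc.prems by simp
  show ?case
  proof (cases "i = j")
    case True
    then show ?thesis using blk Suc.prems my unfolding hj_block_def by fastforce
  next
    case False
    then have ij: "i < j" using Suc.prems by auto
    have fj': "finite (I j)" "I j \<noteq> {}" using fin Suc.prems ij by auto
    have "Max (I i) < Min (I j)" using Suc.IH[of "Min (I j)"] Suc.prems ij fj' by simp
    also have "\<dots> \<le> Max (I j)" using fj' by simp
    also have "\<dots> < Min (I (Suc j))" using blk Suc.prems ij unfolding hj_block_def by auto
    finally show ?thesis using my by simp
  qed
qed

lemma block_order: "i \<in> {1..m} \<Longrightarrow> j \<in> {1..m} \<Longrightarrow> i < j \<Longrightarrow> x \<in> I i \<Longrightarrow> y \<in> I j \<Longrightarrow> x < y"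
  using max_less[of i j y] fin[of i] by (meson Max_ge atLeastAtMost_iff le_less_trans)

lemma b_iff:
  assumes "q \<in> edges m" "p \<in> edges n"
  shows "p \<in> hj_b n I q \<longleftrightarrow> p \<subseteq> UI \<and> q = qq p"
proof -
  have qm: "q \<subseteq> {1..m}" using assms unfolding edges_def le_subsets_def by auto
  show ?thesis
  proof
    assume "p \<in> hj_b n I q"
    then have a: "p \<subseteq> (\<Union>i\<in>q. I i)" "\<forall>i\<in>q. p \<inter> I i \<noteq> {}" unfolding hj_b_def by auto
    have "p \<subseteq> UI" using a qm unfolding UI_def by blast
    moreover have "q = qq p"
    proof
      show "q \<subseteq> qq p" using a qm unfolding qq_def by auto
      show "qq p \<subseteq> q"
      proof
        fix i assume "i \<in> qq p"
        then obtain z where z: "z \<in> p" "z \<in> I i" "i \<in> {1..m}" unfolding qq_def by auto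
        then obtain j where "j \<in> q" "z \<in> I j" using a by auto
        then show "i \<in> q" using z disj[of i j] qm by (cases "i = j") (auto simp: subset_iff)
      qed
    qed
    ultimately show "p \<subseteq> UI \<and> q = qq p" by simp
  next
    assume b: "p \<subseteq> UI \<and> q = qq p"
    have "p \<subseteq> (\<Union>i\<in>q. I i)"
    proof
      fix z assume "z \<in> p"
      then obtain i where "i \<in> {1..m}" "z \<in> I i" using b unfolding UI_def by auto
      then show "z \<in> (\<Union>i\<in>q. I i)" using b \<open>z\<in>p\<close> unfolding qq_def by auto
    qed
    then show "p \<in> hj_b n I q" using b assms unfolding hj_b_def qq_def by auto
  qed
qed

lemma Id_iff:
  assumes "y \<subseteq> edges m" "p \<in> edges n"
  shows "p \<in> hj_Id n I y \<longleftrightarrow> p \<subseteq> UI \<and> qq p \<in> y"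
proof -
  have "{q \<in> y. p \<in> hj_b n I q} = (if p \<subseteq> UI \<and> qq p \<in> y then {qq p} else {})"
    using b_iff assms by auto
  then show ?thesis using assms unfolding hj_Id_def by auto
qed

lemma c_UI: "p \<in> c \<Longrightarrow> \<not> p \<subseteq> UI"
  using dat unfolding hj_data_def UI_def le_subsets_def edges_def by blast

lemma c_edges: "c \<subseteq> edges n" using dat unfolding hj_data_def by blast

lemma emb_iff:
  assumes "y \<subseteq> edges m"
  shows "p \<in> hj_emb n I c y \<longleftrightarrow> p \<in> edges n \<and> (if p \<subseteq> UI then qq p \<in> y else p \<in> c)"
proof -
  have "hj_Id n I y \<subseteq> edges n" unfolding hj_Id_def by auto
  then show ?thesis using Id_iff[OF assms] c_UI c_edges unfolding hj_emb_def by auto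
qed

lemma emb_sub: "hj_emb n I c y \<subseteq> edges n"
  using c_edges unfolding hj_emb_def hj_Id_def by auto

end


lemma binom_dvd:
  assumes "1 \<le> s" "s \<le> d + 1"
  shows "(2::nat) ^ k dvd (fact (d + 1) * 2 ^ k choose s)"
proof -
  let ?N = "fact (d + 1) * 2 ^ k :: nat"
  obtain t where t: "fact (d + 1) = s * t" using dvd_fact[OF assms] by (metis dvdE)
  have N1: "?N \<ge> 1" by (simp add: Suc_leI)
  have "s * (?N choose s) = ?N * (?N - 1 choose (s - 1))"
    using Suc_times_binomial_eq[of "?N - 1" "s - 1"] assms N1 by (simp add: mult.commute)
  also have "\<dots> = s * (t * 2 ^ k * (?N - 1 choose (s - 1)))" using t by (simp add: mult.assoc)
  finally have "?N choose s = t * 2 ^ k * (?N - 1 choose (s - 1))" using assms by simp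
  then show ?thesis by simp
qed



locale L2 = L +
  fixes H :: "nat set set" and i0 :: nat and lam :: "nat set set \<Rightarrow> int"
  assumes Hm: "H \<subseteq> edges m" and cH: "card H = d"
    and i0: "i0 \<in> {1..m}" and i0H: "\<exists>q\<in>H. i0 \<in> q"
    and can: "canonical_in k d X lam"
begin

definition "S = {F. F \<subseteq> edges n \<and> (\<forall>p\<in>F. p \<subseteq> UI) \<and> qq ` F = H \<and> card F = d}"
abbreviation "I0 \<equiv> I i0"
definition "Wof F = \<Union>F \<inter> I0"
definition "R W' F = image (ob (Wof F) W') ` F"
definition "Ws s = set (take s (sorted_list_of_set I0))"
definition "std F = R (Ws (card (Wof F))) F"

lemma fI0: "finite I0" using fin i0 by blast

lemma edge_props: "p \<in> edges n \<Longrightarrow> finite p \<and> p \<noteq> {} \<and> card p \<le> 2 \<and> p \<subseteq> {1..n}"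
  unfolding edges_def le_subsets_def by auto

lemma S_props:
  assumes "F \<in> S"
  shows "finite F" "F \<noteq> {}" "finite (\<Union>F)" "\<Union>F \<subseteq> UI" "inj_on qq F" "card F = d"
    "\<And>p. p \<in> F \<Longrightarrow> finite p \<and> p \<noteq> {} \<and> card p \<le> 2 \<and> p \<subseteq> UI"
proof -
  have a: "F \<subseteq> edges n" "\<forall>p\<in>F. p \<subseteq> UI" "qq ` F = H" "card F = d" using assms unfolding S_def by auto
  show fF: "finite F" using a d1 by (metis card.infinite not_one_le_zero)
  show "F \<noteq> {}" using a d1 by auto
  show "finite (\<Union>F)" using fF a edge_props by blast
  show "\<Union>F \<subseteq> UI" using a by blast
  show "inj_on qq F" using a cH fF by (simp add: eq_card_imp_inj_on)
  show "card F = d" using a by simp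
  show "\<And>p. p \<in> F \<Longrightarrow> finite p \<and> p \<noteq> {} \<and> card p \<le> 2 \<and> p \<subseteq> UI" using a edge_props by blast
qed

lemma qq_single: "p \<subseteq> I0 \<Longrightarrow> p \<noteq> {} \<Longrightarrow> qq p = {i0}"
  unfolding qq_def using i0 disj[of i0] by auto

lemma Wof_card:
  assumes "F \<in> S"
  shows "1 \<le> card (Wof F)" "card (Wof F) \<le> d + 1"
proof -
  note P = S_props[OF assms]
  obtain q where q: "q \<in> H" "i0 \<in> q" using i0H by auto
  then obtain p where p: "p \<in> F" "qq p = q" using assms unfolding S_def by auto
  then have "p \<inter> I0 \<noteq> {}" using q unfolding qq_def by auto
  then have "Wof F \<noteq> {}" using p unfolding Wof_def by auto
  moreover have "finite (Wof F)" using fI0 unfolding Wof_def by auto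
  ultimately show "1 \<le> card (Wof F)" by (simp add: Suc_le_eq card_gt_0_iff)
  have "Wof F = (\<Union>p\<in>F. p \<inter> I0)" unfolding Wof_def by auto
  then have "card (Wof F) \<le> (\<Sum>p\<in>F. card (p \<inter> I0))" using card_UN_le[OF P(1), of "\<lambda>p. p \<inter> I0"] by simp
  also have "\<dots> \<le> (\<Sum>p\<in>F. 1 + (if p \<subseteq> I0 then 1 else 0))"
  proof (rule sum_mono)
    fix p assume "p \<in> F"
    then have pp: "finite p" "p \<noteq> {}" "card p \<le> 2" using P(7) by auto
    show "card (p \<inter> I0) \<le> 1 + (if p \<subseteq> I0 then 1 else 0)"
    proof (cases "p \<subseteq> I0")
      case True then show ?thesis using pp by (simp add: Int_absorb2)
    next
      case False
      then have "p \<inter> I0 \<subset> p" by auto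
      then have "card (p \<inter> I0) < card p" using pp by (simp add: psubset_card_mono)
      then show ?thesis using pp False by simp
    qed
  qed
  also have "\<dots> = (\<Sum>p\<in>F. (1::nat)) + (\<Sum>p\<in>F. if p \<subseteq> I0 then 1 else 0)"
    by (rule sum.distrib)
  also have "\<dots> = card F + card {p\<in>F. p \<subseteq> I0}"
    using sum.inter_filter[OF P(1), of "\<lambda>_. (1::nat)" "\<lambda>p. p \<subseteq> I0"]
    by simp
  finally have c1: "card (Wof F) \<le> card F + card {p\<in>F. p \<subseteq> I0}" .
  have "card {p\<in>F. p \<subseteq> I0} \<le> Suc 0"
  proof (rule card_le_Suc0_iff_eq[THEN iffD2])
    show "finite {p\<in>F. p \<subseteq> I0}" using P(1) by simp
  next
    show "\<forall>p\<in>{p\<in>F. p \<subseteq> I0}. \<forall>p'\<in>{p\<in>F. p \<subseteq> I0}. p = p'"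
    proof (intro ballI)
      fix p p' assume a: "p \<in> {p\<in>F. p \<subseteq> I0}" "p' \<in> {p\<in>F. p \<subseteq> I0}"
      then have "qq p = qq p'" using P(7) qq_single by auto
      then show "p = p'" using a P(5) unfolding inj_on_def by auto
    qed
  qed
  then show "card (Wof F) \<le> d + 1" using c1 P(6) by simp
qed

lemma side: "z \<in> UI \<Longrightarrow> z \<notin> I0 \<Longrightarrow> (\<forall>w\<in>I0. w < z) \<or> (\<forall>w\<in>I0. z < w)"
proof -
  assume z: "z \<in> UI" "z \<notin> I0"
  then obtain j where j: "j \<in> {1..m}" "z \<in> I j" unfolding UI_def by auto
  then have "j \<noteq> i0" using z by auto
  then show ?thesis using block_order[OF i0 j(1)] block_order[OF j(1) i0] j
    by (cases "j < i0") auto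
qed


lemma relabel:
  assumes F: "F \<in> S" and W'I: "W' \<subseteq> I0" and cW': "card W' = card (Wof F)"
  shows "\<forall>x\<in>\<Union>F. \<forall>y\<in>\<Union>F. x<y \<longrightarrow> ob (Wof F) W' x < ob (Wof F) W' y"
    "R W' F \<in> S" "Wof (R W' F) = W'"
proof -
  note P = S_props[OF F]
  define W where "W = Wof F"
  define \<phi> where "\<phi> = ob W W'"
  have fW: "finite W" using fI0 unfolding W_def Wof_def by auto
  have fW': "finite W'" using fI0 W'I finite_subset by blast
  have cc: "card W = card W'" using cW' W_def by simp
  have in1: "x \<in> W \<Longrightarrow> \<phi> x \<in> W'" for x using ob_in[OF fW fW' cc] \<phi>_def by simp
  have in2: "x \<notin> W \<Longrightarrow> \<phi> x = x" for x unfolding \<phi>_def ob_def by simp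
  have out: "x \<in> \<Union>F \<Longrightarrow> x \<notin> W \<Longrightarrow> x \<notin> I0" for x unfolding W_def Wof_def by auto
  have WI: "W \<subseteq> I0" unfolding W_def Wof_def by auto
  have WU: "W \<subseteq> \<Union>F" unfolding W_def Wof_def by auto
  show smo: "\<forall>x\<in>\<Union>F. \<forall>y\<in>\<Union>F. x<y \<longrightarrow> ob (Wof F) W' x < ob (Wof F) W' y"
  proof (intro ballI impI)
    fix x y assume xy: "x \<in> \<Union>F" "y \<in> \<Union>F" "x < y"
    show "ob (Wof F) W' x < ob (Wof F) W' y" unfolding W_def[symmetric] \<phi>_def[symmetric]
    proof (cases "x \<in> W"; cases "y \<in> W")
      assume "x \<in> W" "y \<in> W" then show "\<phi> x < \<phi> y"
        using ob_less[OF fW fW' cc] xy \<phi>_def by simp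
    next
      assume a: "x \<in> W" "y \<notin> W"
      then have "y \<notin> I0" "y \<in> UI" using out xy P(4) by auto
      then have "\<forall>w\<in>I0. w < y" using side[of y] a WI xy(3) by force
      then show "\<phi> x < \<phi> y" using in1 in2 a W'I by auto
    next
      assume a: "x \<notin> W" "y \<in> W"
      then have "x \<notin> I0" "x \<in> UI" using out xy P(4) by auto
      then have "\<forall>w\<in>I0. x < w" using side[of x] a WI xy(3) by force
      then show "\<phi> x < \<phi> y" using in1 in2 a W'I by auto
    next
      assume a: "x \<notin> W" "y \<notin> W"
      then show "\<phi> x < \<phi> y" using in2 xy by simp
    qed
  qed
  have inj: "inj_on \<phi> (\<Union>F)" using smo_inj[OF smo] unfolding W_def \<phi>_def .
  have RF: "R W' F = image \<phi> ` F" unfolding R_def \<phi>_def W_def ..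
  have qqp: "qq (\<phi> ` p) = qq p" if p: "p \<in> F" for p
  proof -
    have "(\<phi> ` p \<inter> I i \<noteq> {}) = (p \<inter> I i \<noteq> {})" if i: "i \<in> {1..m}" for i
    proof (cases "i = i0")
      case True
      show ?thesis
      proof
        assume "\<phi> ` p \<inter> I i \<noteq> {}"
        then obtain z where z: "z \<in> p" "\<phi> z \<in> I0" using True by auto
        show "p \<inter> I i \<noteq> {}"
        proof (cases "z \<in> W")
          case True then show ?thesis using z WI \<open>i = i0\<close> by auto
        next
          case False then show ?thesis using z in2 out p by auto
        qed
      next
        assume "p \<inter> I i \<noteq> {}"
        then obtain z where z: "z \<in> p" "z \<in> I0" using True by auto
        then have "z \<in> W" using p unfolding W_def Wof_def by auto
        then show "\<phi> ` p \<inter> I i \<noteq> {}" using in1 W'I z True by blast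
      qed
    next
      case False
      have dj: "I i \<inter> I0 = {}" using disj[OF i i0 False] .
      show ?thesis
      proof
        assume "\<phi> ` p \<inter> I i \<noteq> {}"
        then obtain z where z: "z \<in> p" "\<phi> z \<in> I i" by auto
        show "p \<inter> I i \<noteq> {}"
        proof (cases "z \<in> W")
          case True then show ?thesis using z in1 W'I dj by blast
        next
          case False then show ?thesis using z in2 by auto
        qed
      next
        assume "p \<inter> I i \<noteq> {}"
        then obtain z where z: "z \<in> p" "z \<in> I i" by auto
        then have "z \<notin> W" using WI dj by blast
        then show "\<phi> ` p \<inter> I i \<noteq> {}" using in2 z by (metis IntI emptyE imageI)
      qed
    qed
    then show ?thesis unfolding qq_def by auto
  qed
  have img_UI: "\<phi> ` p \<subseteq> UI" if "p \<in> F" for p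
  proof
    fix z assume "z \<in> \<phi> ` p"
    then obtain x where x: "x \<in> p" "z = \<phi> x" by auto
    show "z \<in> UI"
    proof (cases "x \<in> W")
      case True then show ?thesis using x in1 W'I i0 unfolding UI_def by blast
    next
      case False then show ?thesis using x in2 P(7) that by auto
    qed
  qed
  have injF: "inj_on (image \<phi>) F"
    using inj_on_image_Pow[OF inj] by (rule inj_on_subset) auto
  show "R W' F \<in> S" unfolding RF S_def
  proof (intro CollectI conjI ballI)
    show "image \<phi> ` F \<subseteq> edges n"
    proof
      fix p' assume "p' \<in> image \<phi> ` F"
      then obtain p where p: "p \<in> F" "p' = \<phi> ` p" by auto
      have "card p' \<le> 2" using P(7)[OF p(1)] p(2) card_image_le le_trans by blast
      then show "p' \<in> edges n" using P(7)[OF p(1)] p img_UI UIn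
        unfolding edges_def le_subsets_def by auto
    qed
    show "\<And>p'. p' \<in> image \<phi> ` F \<Longrightarrow> p' \<subseteq> UI" using img_UI by auto
    have "qq ` image \<phi> ` F = qq ` F" unfolding image_image using qqp by (auto intro: image_cong)
    then show "qq ` image \<phi> ` F = H" using F unfolding S_def by simp
    show "card (image \<phi> ` F) = d" using card_image[OF injF] P(6) by simp
  qed
  have "\<Union>(image \<phi> ` F) = \<phi> ` (\<Union>F)" by auto
  also have "\<dots> = \<phi> ` W \<union> \<phi> ` (\<Union>F - W)" using WU by auto
  also have "\<phi> ` W = W'" using ob_image[OF fW fW' cc] \<phi>_def by simp
  also have "\<phi> ` (\<Union>F - W) = \<Union>F - W" using in2 by auto
  finally have "\<Union>(image \<phi> ` F) \<inter> I0 = W'" using W'I out by auto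
  then show "Wof (R W' F) = W'" unfolding RF Wof_def .
qed


lemma R_id: "F \<in> S \<Longrightarrow> R (Wof F) F = F"
proof -
  assume "F \<in> S"
  have "finite (Wof F)" using fI0 unfolding Wof_def by auto
  then show ?thesis unfolding R_def by (simp add: ob_id)
qed

lemma R_comp:
  assumes F: "F \<in> S" and W': "W' \<subseteq> I0" "card W' = card (Wof F)"
    and W'': "W'' \<subseteq> I0" "card W'' = card (Wof F)"
  shows "R W'' (R W' F) = R W'' F"
proof -
  have fW: "finite (Wof F)" using fI0 unfolding Wof_def by auto
  have fW': "finite W'" "finite W''" using fI0 W' W'' finite_subset by blast+
  have e: "Wof (R W' F) = W'" using relabel[OF F W'] by simp
  have pt: "ob W' W'' (ob (Wof F) W' x) = ob (Wof F) W'' x" if x: "x \<in> \<Union>F" for x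
  proof (cases "x \<in> Wof F")
    case True then show ?thesis using ob_comp[OF fW fW'(1) fW'(2)] W' W'' by simp
  next
    case False
    then have "x \<notin> I0" using x unfolding Wof_def by auto
    then have "x \<notin> W'" using W' by auto
    then show ?thesis using False unfolding ob_def by simp
  qed
  have pp: "ob W' W'' ` ob (Wof F) W' ` p = ob (Wof F) W'' ` p" if "p \<in> F" for p
    unfolding image_image using pt that by (auto intro!: image_cong)
  have "R W'' (R W' F) = image (ob W' W'') ` image (ob (Wof F) W') ` F"
    unfolding R_def[of W''] e unfolding R_def ..
  also have "\<dots> = (\<lambda>p. ob W' W'' ` ob (Wof F) W' ` p) ` F" by (rule image_image)
  also have "\<dots> = R W'' F" unfolding R_def by (rule image_cong[OF refl pp])
  finally show ?thesis .
qed

lemma cI0: "card I0 = fact (d + 1) * 2 ^ k" using IX i0 by blast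

lemma Ws_props: "s \<le> d + 1 \<Longrightarrow> Ws s \<subseteq> I0 \<and> card (Ws s) = s"
proof -
  assume s: "s \<le> d + 1"
  have "d + 1 \<le> fact (d + 1)" by (rule fact_ge_self)
  also have "(fact (d + 1)::nat) \<le> fact (d + 1) * 2 ^ k" by simp
  finally have "s \<le> card I0" using s cI0 by simp
  then show ?thesis unfolding Ws_def using fI0
    by (auto simp: distinct_card dest: in_set_takeD)
qed

lemma inLe: "F \<in> S \<Longrightarrow> F \<in> le_subsets (le_subsets X 2) d"
proof -
  assume F: "F \<in> S"
  note P = S_props[OF F]
  have "UI \<subseteq> X" using IX unfolding UI_def by blast
  then have "F \<subseteq> le_subsets X 2" using P(7) unfolding le_subsets_def by blast
  then show ?thesis using P unfolding le_subsets_def by auto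
qed

lemma lam_R:
  assumes F: "F \<in> S" and W': "W' \<subseteq> I0" "card W' = card (Wof F)"
  shows "[lam (R W' F) = lam F] (mod 2^k)"
proof -
  note r = relabel[OF F W']
  have "hj_type (R W' F) = hj_type F" unfolding R_def
    by (rule type_inv[OF S_props(3)[OF F] r(1)])
  then show ?thesis using can inLe[OF F] inLe[OF r(2)] unfolding canonical_in_def by blast
qed

lemma std_props:
  assumes F: "F \<in> S"
  shows "std F \<in> S" "card (Wof (std F)) = card (Wof F)" "[lam (std F) = lam F] (mod 2^k)"
    "std (std F) = std F"
proof -
  have W: "Ws (card (Wof F)) \<subseteq> I0" "card (Ws (card (Wof F))) = card (Wof F)"
    using Ws_props Wof_card[OF F] by auto
  note r = relabel[OF F W]
  show "std F \<in> S" using r unfolding std_def by simp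
  show c: "card (Wof (std F)) = card (Wof F)" using r W unfolding std_def by simp
  show "[lam (std F) = lam F] (mod 2^k)" using lam_R[OF F W] unfolding std_def .
  show "std (std F) = std F" unfolding std_def[of "std F"] c unfolding std_def
    using R_comp[OF F W W] .
qed


lemma fiber:
  assumes G: "G \<in> S" "std G = G"
  shows "{F\<in>S. std F = G} = (\<lambda>W. R W G) ` {W. W \<subseteq> I0 \<and> card W = card (Wof G)}"
    "inj_on (\<lambda>W. R W G) {W. W \<subseteq> I0 \<and> card W = card (Wof G)}"
proof -
  show "inj_on (\<lambda>W. R W G) {W. W \<subseteq> I0 \<and> card W = card (Wof G)}"
  proof (rule inj_onI)
    fix W1 W2 assume a: "W1 \<in> {W. W \<subseteq> I0 \<and> card W = card (Wof G)}" "W2 \<in> {W. W \<subseteq> I0 \<and> card W = card (Wof G)}"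
      "R W1 G = R W2 G"
    have "W1 = Wof (R W1 G)" using relabel(3)[OF G(1), of W1] a(1) by simp
    also have "\<dots> = Wof (R W2 G)" using a(3) by simp
    also have "\<dots> = W2" using relabel(3)[OF G(1), of W2] a(2) by simp
    finally show "W1 = W2" .
  qed
  show "{F\<in>S. std F = G} = (\<lambda>W. R W G) ` {W. W \<subseteq> I0 \<and> card W = card (Wof G)}"
  proof (intro set_eqI iffI)
    fix F assume "F \<in> {F\<in>S. std F = G}"
    then have F: "F \<in> S" "std F = G" by auto
    have W: "Ws (card (Wof F)) \<subseteq> I0" "card (Ws (card (Wof F))) = card (Wof F)"
      using Ws_props Wof_card[OF F(1)] by auto
    have WF: "Wof F \<subseteq> I0" unfolding Wof_def by auto
    have "F = R (Wof F) F" using R_id[OF F(1)] by simp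
    also have "\<dots> = R (Wof F) (std F)" unfolding std_def using R_comp[OF F(1) W WF refl] by simp
    finally have "F = R (Wof F) G" using F by simp
    moreover have "card (Wof F) = card (Wof G)" using std_props(2)[OF F(1)] F by simp
    ultimately show "F \<in> (\<lambda>W. R W G) ` {W. W \<subseteq> I0 \<and> card W = card (Wof G)}" using WF by blast
  next
    fix F assume "F \<in> (\<lambda>W. R W G) ` {W. W \<subseteq> I0 \<and> card W = card (Wof G)}"
    then obtain W where W: "W \<subseteq> I0" "card W = card (Wof G)" "F = R W G" by auto
    note r = relabel[OF G(1) W(1,2)]
    have Ws: "Ws (card (Wof G)) \<subseteq> I0" "card (Ws (card (Wof G))) = card (Wof G)"
      using Ws_props Wof_card[OF G(1)] by auto
    have "std F = R (Ws (card (Wof G))) (R W G)" unfolding std_def W(3) r(3) W(2) ..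
    also have "\<dots> = R (Ws (card (Wof G))) G" using R_comp[OF G(1) W(1,2) Ws] .
    also have "\<dots> = G" using G(2) unfolding std_def .
    finally show "F \<in> {F\<in>S. std F = G}" using r(2) W(3) by simp
  qed
qed

lemma finS: "finite S"
proof -
  have "finite (edges n)" unfolding edges_def le_subsets_def by (rule finite_subset[of _ "Pow {1..n}"]) auto
  moreover have "S \<subseteq> Pow (edges n)" unfolding S_def by auto
  ultimately show ?thesis using finite_subset by blast
qed

lemma sumS: "[(\<Sum>F\<in>S. lam F) = 0] (mod 2^k)"
proof -
  have "(\<Sum>F\<in>S. lam F) = (\<Sum>G\<in>std ` S. \<Sum>F\<in>{F\<in>S. std F = G}. lam F)"
    using sum.group[OF finS finite_imageI[OF finS], where g=std and h=lam] by simp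
  moreover have "[(\<Sum>G\<in>std ` S. \<Sum>F\<in>{F\<in>S. std F = G}. lam F) = (\<Sum>G\<in>std ` S. 0)] (mod 2^k)"
  proof (rule cong_sum)
    fix G assume "G \<in> std ` S"
    then obtain F0 where F0: "F0 \<in> S" "G = std F0" by auto
    have G: "G \<in> S" "std G = G" using std_props[OF F0(1)] F0 by auto
    have s1: "[(\<Sum>F\<in>{F\<in>S. std F = G}. lam F) = (\<Sum>F\<in>{F\<in>S. std F = G}. lam G)] (mod 2^k)"
    proof (rule cong_sum)
      fix F assume "F \<in> {F\<in>S. std F = G}"
      then show "[lam F = lam G] (mod 2^k)" using std_props(3)[of F] by (auto simp: cong_sym)
    qed
    have s2: "card {F\<in>S. std F = G} = card I0 choose card (Wof G)"
    proof -
      have "card {F\<in>S. std F = G} = card {W. W \<subseteq> I0 \<and> card W = card (Wof G)}"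
        unfolding fiber(1)[OF G] by (rule card_image[OF fiber(2)[OF G]])
      also have "\<dots> = card I0 choose card (Wof G)" by (rule n_subsets[OF fI0])
      finally show ?thesis .
    qed
    have "2 ^ k dvd (card I0 choose card (Wof G))"
      using binom_dvd[OF Wof_card[OF G(1)]] cI0 by simp
    have "(\<Sum>F\<in>{F\<in>S. std F = G}. lam G) = of_nat (card I0 choose card (Wof G)) * lam G"
      by (simp only: sum_constant s2)
    then have "[(\<Sum>F\<in>{F\<in>S. std F = G}. lam F) = of_nat (card I0 choose card (Wof G)) * lam G] (mod 2^k)"
      using s1 by (simp only:)
    moreover have "[of_nat (card I0 choose card (Wof G)) * lam G = 0] (mod 2^k)"
      using \<open>2 ^ k dvd (card I0 choose card (Wof G))\<close>
      by (simp add: cong_0_iff) (metis dvd_mult2 of_nat_dvd_iff of_nat_numeral of_nat_power)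
    ultimately show "[(\<Sum>F\<in>{F\<in>S. std F = G}. lam F) = 0] (mod 2^k)" by (rule cong_trans)
  qed
  ultimately show ?thesis by simp
qed

end


context L
begin

lemma qq_edge:
  assumes p: "p \<in> edges n" "p \<subseteq> UI"
  shows "qq p \<in> edges m"
proof -
  define f where "f z = (SOME i. i \<in> {1..m} \<and> z \<in> I i)" for z
  have f: "f z \<in> {1..m} \<and> z \<in> I (f z)" if "z \<in> UI" for z
  proof -
    have "\<exists>i. i \<in> {1..m} \<and> z \<in> I i" using that unfolding UI_def by blast
    then show ?thesis unfolding f_def by (rule someI_ex)
  qed
  have qf: "qq p \<subseteq> f ` p"
  proof
    fix i assume "i \<in> qq p"
    then obtain z where z: "z \<in> p" "z \<in> I i" "i \<in> {1..m}" unfolding qq_def by auto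
    have fz: "f z \<in> {1..m}" "z \<in> I (f z)" using f[of z] p z by auto
    have "f z = i"
    proof (rule ccontr)
      assume "f z \<noteq> i"
      then have "I i \<inter> I (f z) = {}" using disj[OF z(3) fz(1)] by simp
      then show False using z fz by blast
    qed
    then show "i \<in> f ` p" using z by auto
  qed
  have fp: "finite p" "p \<noteq> {}" "card p \<le> 2" using p unfolding edges_def le_subsets_def by auto
  have c2: "card (qq p) \<le> 2"
    using card_mono[OF finite_imageI[OF fp(1)] qf] card_image_le[OF fp(1), of f] fp(3) by linarith
  obtain z where "z \<in> p" using fp by auto
  then have "f z \<in> qq p" using f[of z] p unfolding qq_def by auto
  then have "qq p \<noteq> {}" by auto
  moreover have "qq p \<subseteq> {1..m}" unfolding qq_def by auto
  ultimately show ?thesis unfolding edges_def le_subsets_def using c2 finite_subset by blast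
qed

lemma comp_rep:
  assumes rep: "int_poly_rep n k d Q \<alpha> lam" and can: "canonical_in k d X lam"
  shows "\<exists>\<alpha>' lam'. int_poly_rep m k (d - 1) (Q \<circ> hj_emb n I c) \<alpha>' lam'"
proof -
  define L0 where "L0 = le_subsets (edges n) d"
  define good where "good F = (\<forall>p\<in>F. \<not> p \<subseteq> UI \<longrightarrow> p \<in> c)" for F
  define hh where "hh F = qq ` {p\<in>F. p \<subseteq> UI}" for F
  define lam' where "lam' H = (\<Sum>F\<in>{F\<in>L0. hh F = H}. lam F * (if good F then 1 else 0))" for H
  define P where "P = {H. H \<subseteq> edges m \<and> card H \<le> d}"
  define D where "D = {H. H \<subseteq> edges m \<and> card H = d}"
  have finE: "finite (edges N)" for N unfolding edges_def le_subsets_def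
    by (rule finite_subset[of _ "Pow {1..N}"]) auto
  have finL0: "finite L0" unfolding L0_def le_subsets_def
    by (rule finite_subset[of _ "Pow (edges n)"]) (auto simp: finE)
  have finP: "finite P" unfolding P_def by (rule finite_subset[of _ "Pow (edges m)"]) (auto simp: finE)
  have hhP: "hh ` L0 \<subseteq> P"
  proof
    fix H assume "H \<in> hh ` L0"
    then obtain F where F: "F \<in> L0" "H = hh F" by auto
    have fF: "finite F" "card F \<le> d" "F \<subseteq> edges n" using F unfolding L0_def le_subsets_def by auto
    have "card H \<le> card {p\<in>F. p \<subseteq> UI}" unfolding F(2) hh_def by (rule card_image_le) (simp add: fF)
    also have "\<dots> \<le> card F" using fF by (intro card_mono) auto
    finally have "card H \<le> d" using fF by simp
    moreover have "H \<subseteq> edges m" unfolding F(2) hh_def using qq_edge fF by auto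
    ultimately show "H \<in> P" unfolding P_def by simp
  qed
  have Ddiv: "[lam' H = 0] (mod 2^k)" if H: "H \<in> D" for H
  proof -
    have Hm: "H \<subseteq> edges m" and cH: "card H = d" using H unfolding D_def by auto
    then have "H \<noteq> {}" using d1 by auto
    then obtain q where q: "q \<in> H" by auto
    then have "q \<in> edges m" using Hm by auto
    then obtain i0 where i0: "i0 \<in> q" "i0 \<in> {1..m}" unfolding edges_def le_subsets_def by blast
    interpret L2 n m k d X I c H i0 lam
      by unfold_locales (use Hm cH i0 q can in auto)
    have eq: "{F\<in>L0. hh F = H} = S"
    proof (intro set_eqI iffI)
      fix F assume "F \<in> {F\<in>L0. hh F = H}"
      then have F: "F \<in> L0" "hh F = H" by auto
      have fF: "finite F" "card F \<le> d" "F \<subseteq> edges n" using F unfolding L0_def le_subsets_def by auto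
      define F' where "F' = {p\<in>F. p \<subseteq> UI}"
      have sub: "F' \<subseteq> F" unfolding F'_def by auto
      have fF': "finite F'" using fF(1) sub finite_subset by blast
      have "d = card (qq ` F')" using F(2) cH unfolding hh_def F'_def by simp
      also have "\<dots> \<le> card F'" by (rule card_image_le[OF fF'])
      finally have c1: "d \<le> card F'" .
      have c2: "card F' \<le> card F" by (rule card_mono[OF fF(1) sub])
      have eqF: "F' = F" using card_subset_eq[OF fF(1) sub] c1 c2 fF(2) by simp
      have "\<forall>p\<in>F. p \<subseteq> UI" using eqF unfolding F'_def by blast
      moreover have "qq ` F = H" using F(2) eqF unfolding hh_def F'_def by simp
      moreover have "card F = d" using c1 c2 fF(2) by simp
      ultimately show "F \<in> S" unfolding S_def using fF(3) by blast
    next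
      fix F assume F: "F \<in> S"
      note Pr = S_props[OF F]
      have "{p\<in>F. p \<subseteq> UI} = F" using Pr(7) by blast
      then have "hh F = qq ` F" unfolding hh_def by simp
      then show "F \<in> {F\<in>L0. hh F = H}" using F Pr unfolding S_def L0_def le_subsets_def by auto
    qed
    have "lam' H = (\<Sum>F\<in>S. lam F)" unfolding lam'_def eq
      by (rule sum.cong[OF refl]) (use S_props(7) in \<open>auto simp: good_def\<close>)
    then show ?thesis using sumS by simp
  qed
  show ?thesis
  proof (intro exI)
    show "int_poly_rep m k (d - 1) (Q \<circ> hj_emb n I c) (\<alpha> + lam' {}) lam'"
      unfolding int_poly_rep_def
    proof (intro allI impI)
      fix y assume y: "y \<subseteq> edges m"
      let ?e = "hj_emb n I c y"
      define g where "g H = lam' H * (if H \<subseteq> y then 1 else 0)" for H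
      have q0: "[Q ?e = \<alpha> + (\<Sum>F\<in>L0. lam F * (if F \<subseteq> ?e then 1 else 0))] (mod 2^k)"
        using rep emb_sub unfolding int_poly_rep_def L0_def by blast
      have e1: "(\<Sum>F\<in>L0. lam F * (if F \<subseteq> ?e then 1 else 0))
          = (\<Sum>F\<in>L0. lam F * (if good F then 1 else 0) * (if hh F \<subseteq> y then 1 else 0))"
      proof (rule sum.cong[OF refl])
        fix F assume "F \<in> L0"
        then have "F \<subseteq> edges n" unfolding L0_def le_subsets_def by auto
        then have "(F \<subseteq> ?e) = (\<forall>p\<in>F. if p \<subseteq> UI then qq p \<in> y else p \<in> c)"
          using emb_iff[OF y] by blast
        also have "\<dots> = (good F \<and> hh F \<subseteq> y)"
          unfolding good_def hh_def by auto
        finally have "(F \<subseteq> ?e) = (good F \<and> hh F \<subseteq> y)" .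
        then show "lam F * (if F \<subseteq> ?e then 1 else 0)
          = lam F * (if good F then 1 else 0) * (if hh F \<subseteq> y then 1 else 0)" by simp
      qed
      have e2: "(\<Sum>F\<in>L0. lam F * (if good F then 1 else 0) * (if hh F \<subseteq> y then 1 else 0))
          = (\<Sum>H\<in>P. lam' H * (if H \<subseteq> y then 1 else 0))"
      proof -
        have "(\<Sum>F\<in>L0. lam F * (if good F then 1 else 0) * (if hh F \<subseteq> y then 1 else 0))
          = (\<Sum>H\<in>P. \<Sum>F\<in>{F\<in>L0. hh F = H}. lam F * (if good F then 1 else 0) * (if hh F \<subseteq> y then 1 else 0))"
          by (rule sum.group[OF finL0 finP hhP, symmetric])
        also have "\<dots> = (\<Sum>H\<in>P. lam' H * (if H \<subseteq> y then 1 else 0))"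
          unfolding lam'_def by (rule sum.cong[OF refl]) (auto simp: sum_distrib_right intro!: sum.cong)
        finally show ?thesis .
      qed
      have Peq: "P = insert {} (le_subsets (edges m) (d - 1) \<union> D)"
      proof (intro set_eqI iffI)
        fix H assume "H \<in> P"
        then have H: "H \<subseteq> edges m" "card H \<le> d" unfolding P_def by auto
        have "finite H" using H(1) finE finite_subset by blast
        then show "H \<in> insert {} (le_subsets (edges m) (d - 1) \<union> D)"
          using H unfolding D_def le_subsets_def by (cases "card H = d") auto
      next
        fix H assume "H \<in> insert {} (le_subsets (edges m) (d - 1) \<union> D)"
        then show "H \<in> P" unfolding P_def D_def le_subsets_def by auto
      qed
      have n0: "{} \<notin> le_subsets (edges m) (d - 1) \<union> D"
        unfolding D_def le_subsets_def using d1 by auto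
      have dj: "le_subsets (edges m) (d - 1) \<inter> D = {}"
        unfolding D_def le_subsets_def using d1 by auto
      have finLm: "finite (le_subsets (edges m) (d - 1))" "finite D"
        unfolding D_def le_subsets_def
        by (rule finite_subset[of _ "Pow (edges m)"], auto simp: finE)+
      have sD: "[(\<Sum>H\<in>D. g H) = 0] (mod 2^k)"
      proof -
        have "[(\<Sum>H\<in>D. g H) = (\<Sum>H\<in>D. 0)] (mod 2^k)"
          by (rule cong_sum) (use Ddiv in \<open>auto simp: cong_0_iff g_def\<close>)
        then show ?thesis by simp
      qed
      have "(\<Sum>H\<in>P. g H) = g {} + ((\<Sum>H\<in>le_subsets (edges m) (d - 1). g H) + (\<Sum>H\<in>D. g H))"
        unfolding Peq using n0 dj finLm by (simp add: sum.union_disjoint)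
      then have q1: "[Q ?e = \<alpha> + (g {} + ((\<Sum>H\<in>le_subsets (edges m) (d - 1). g H) + (\<Sum>H\<in>D. g H)))] (mod 2^k)"
        using q0 e1 e2 unfolding g_def by simp
      have "[\<alpha> + (g {} + ((\<Sum>H\<in>le_subsets (edges m) (d - 1). g H) + (\<Sum>H\<in>D. g H)))
           = \<alpha> + (g {} + ((\<Sum>H\<in>le_subsets (edges m) (d - 1). g H) + 0))] (mod 2^k)"
        by (intro cong_add cong_refl sD)
      with q1 have "[Q ?e = \<alpha> + (g {} + (\<Sum>H\<in>le_subsets (edges m) (d - 1). g H))] (mod 2^k)"
        using cong_trans by fastforce
      then show "[(Q \<circ> hj_emb n I c) y = \<alpha> + lam' {} + (\<Sum>H\<in>le_subsets (edges m) (d - 1). lam' H * (if H \<subseteq> y then 1 else 0))] (mod 2^k)"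
        unfolding g_def by (simp add: add.assoc)
    qed
  qed
qed

end

theorem lemma5p10:
  fixes n k m d :: nat and X :: "nat set" and Q :: "nat set set \<Rightarrow> int"
    and \<alpha> :: int and lam :: "nat set set \<Rightarrow> int"
    and I :: "nat \<Rightarrow> nat set" and c :: "nat set set"
  assumes "0 < n" and "0 < k"
    and "X \<noteq> {}" and "X \<subseteq> {1..n}"
    and "int_poly_deg n k Q = d" and "1 \<le> d"
    and "int_poly_rep n k d Q \<alpha> lam"
    and "hj_block n m I c"
    and "canonical_in k d X lam"
    and "\<forall>i\<in>{1..m}. I i \<subseteq> X \<and> card (I i) = fact (d + 1) * 2 ^ k"
  shows "int_poly_deg m k (Q \<circ> hj_emb n I c) < d"
proof -
  interpret L n m k d X I c
    by unfold_locales (use assms in auto)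
  have "is_int_poly m k (d - 1) (Q \<circ> hj_emb n I c)"
    using comp_rep[OF assms(7) assms(9)] unfolding is_int_poly_def .
  then have "int_poly_deg m k (Q \<circ> hj_emb n I c) \<le> d - 1"
    unfolding int_poly_deg_def by (rule Least_le)
  then show ?thesis using assms(6) by simp
qed

end
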